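(* Let $(\bar z_m)_{m\in\mathbb N}$ be a sequence in $\ell_\infty$ which converges weak$^*$ (as the dual of $\ell_1$) to $\bar z\in\ell_\infty$, and let $|||\cdot|||$ be the norm on $\ell_\infty$ defined in the context. Then $\lim_m|||\bar z_m|||$ exists if and only if $\lim_m\|\bar z_m\|_\infty$ exists. Moreover, $\lim_m|||\bar z_m|||=|||\bar z|||$ if and only if $\lim_m\|\bar z_m\|_\infty=\|\bar z\|_\infty$.
   Context: Let $c_{00}(\mathbb Q)$ be the set of finitely supported sequences with rational coefficients, and let $(u_n)_{n\in\mathbb N}$ be a sequence in $c_{00}(\mathbb Q)$ which lists every element of $c_{00}(\mathbb Q)$ infinitely many times. Let $(a_n)_{n\in\mathbb N}$ be a strictly increasing sequence of positive integers with $a_n>\max\operatorname{supp} u_n$ and $a_n>\|u_n\|_1$ for every $n$. $(e_n)$ denotes the canonical unit vectors and $\langle x,y\rangle=\sum_n x_ny_n$ for $x\in\ell_\infty$, $y\in\ell_1$. For $\bar x\in\ell_\infty$ define $|||\bar x||| = \|\bar x\|_\infty + \sum_{n} 2^{-a_n^2}|\langle \bar x, u_n - e_{a_n}\rangle|$ (it is known that $\sum_n 2^{-a_n^2}\|u_n-e_{a_n}\|_1\le 2$). *)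

theory Defs
  imports "HOL-Analysis.Analysis"
begin

definition linf :: "(nat \<Rightarrow> real) set" where
  "linf = {x. bounded (range x)}"

definition lone :: "(nat \<Rightarrow> real) set" where
  "lone = {y. summable (\<lambda>k. \<bar>y k\<bar>)}"

definition supp_seq :: "(nat \<Rightarrow> real) \<Rightarrow> nat set" where
  "supp_seq x = {k. x k \<noteq> 0}"

definition c00Q :: "(nat \<Rightarrow> real) set" where
  "c00Q = {x. finite (supp_seq x) \<and> (\<forall>k. x k \<in> \<rat>)}"

definition pairing :: "(nat \<Rightarrow> real) \<Rightarrow> (nat \<Rightarrow> real) \<Rightarrow> real" where
  "pairing x y = (\<Sum>k. x k * y k)"

definition norm1 :: "(nat \<Rightarrow> real) \<Rightarrow> real" where
  "norm1 y = (\<Sum>k. \<bar>y k\<bar>)"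

definition supnorm :: "(nat \<Rightarrow> real) \<Rightarrow> real" where
  "supnorm x = (SUP k. \<bar>x k\<bar>)"

definition unitvec :: "nat \<Rightarrow> nat \<Rightarrow> real" where
  "unitvec n = (\<lambda>k. if k = n then 1 else 0)"

definition tnorm :: "(nat \<Rightarrow> nat \<Rightarrow> real) \<Rightarrow> (nat \<Rightarrow> nat) \<Rightarrow> (nat \<Rightarrow> real) \<Rightarrow> real" where
  "tnorm u a x = supnorm x +
     (\<Sum>n. (1 / 2) ^ ((a n) ^ 2) * \<bar>pairing x (\<lambda>k. u n k - unitvec (a n) k)\<bar>)"

definition weak_star_conv :: "(nat \<Rightarrow> nat \<Rightarrow> real) \<Rightarrow> (nat \<Rightarrow> real) \<Rightarrow> bool" where
  "weak_star_conv z w \<longleftrightarrow>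
     (\<forall>y\<in>lone. (\<lambda>m. pairing (z m) y) \<longlonglongrightarrow> pairing w y)"

end

theory Submission
  imports Defs
begin

lemma linf_bound: "x \<in> linf \<Longrightarrow> \<exists>B. \<forall>k. \<bar>x k\<bar> \<le> B"
  unfolding linf_def bounded_iff by auto

lemma pair_bound:
  assumes B: "\<And>k. \<bar>x k\<bar> \<le> B" and y: "y \<in> lone"
  shows "summable (\<lambda>k. \<bar>x k * y k\<bar>)" "\<bar>pairing x y\<bar> \<le> B * norm1 y"
proof -
  have sy: "summable (\<lambda>k. \<bar>y k\<bar>)" using y by (simp add: lone_def)
  have le: "\<bar>x k * y k\<bar> \<le> B * \<bar>y k\<bar>" for k
    by (simp add: abs_mult B mult_right_mono)
  show s: "summable (\<lambda>k. \<bar>x k * y k\<bar>)"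
    by (rule summable_comparison_test[OF _ summable_mult[OF sy, of B]]) (use le in auto)
  have "\<bar>pairing x y\<bar> \<le> (\<Sum>k. \<bar>x k * y k\<bar>)"
    unfolding pairing_def by (rule summable_rabs[OF s])
  also have "\<dots> \<le> (\<Sum>k. B * \<bar>y k\<bar>)"
    by (rule suminf_le[OF le s summable_mult[OF sy]])
  also have "\<dots> = B * norm1 y" unfolding norm1_def by (rule suminf_mult[OF sy])
  finally show "\<bar>pairing x y\<bar> \<le> B * norm1 y" .
qed

lemma unit_mult: "(\<lambda>j. x j * unitvec k j) = (\<lambda>j. if j = k then x j else 0)"
  by (auto simp: unitvec_def)

lemma pairing_unit: "pairing x (unitvec k) = x k"
  unfolding pairing_def unit_mult using sums_single[of k x] by (simp add: sums_iff)

lemma unit_lone: "unitvec k \<in> lone"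
  unfolding lone_def mem_Collect_eq by (rule summable_finite[of "{k}"]) (auto simp: unitvec_def)

lemma norm1_unit: "norm1 (unitvec k) = 1"
proof -
  have "(\<lambda>j. \<bar>unitvec k j\<bar>) = (\<lambda>j. if j = k then (\<lambda>_. 1::real) j else 0)"
    by (auto simp: unitvec_def)
  then show ?thesis unfolding norm1_def using sums_single[of k "\<lambda>_. 1::real"] by (simp add: sums_iff)
qed

lemma supnorm_ge: "(\<And>k. \<bar>x k\<bar> \<le> B) \<Longrightarrow> \<bar>x k\<bar> \<le> supnorm x"
  unfolding supnorm_def by (rule cSUP_upper) (auto intro!: bdd_aboveI2)

lemma supnorm_le: "(\<And>k. \<bar>x k\<bar> \<le> B) \<Longrightarrow> supnorm x \<le> B"
  unfolding supnorm_def by (rule cSUP_least) auto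

lemma supnorm_less: "(\<And>k. \<bar>x k\<bar> \<le> B) \<Longrightarrow> t < supnorm x \<Longrightarrow> \<exists>k. t < \<bar>x k\<bar>"
  unfolding supnorm_def by (subst (asm) less_cSUP_iff) (auto intro!: bdd_aboveI2)

lemma hump:
  fixes z :: "nat \<Rightarrow> nat \<Rightarrow> real"
  assumes zb: "\<And>m. \<exists>B. \<forall>k. \<bar>z m k\<bar> \<le> B"
    and P: "\<And>y. y \<in> lone \<Longrightarrow> \<exists>C. \<forall>m. \<bar>pairing (z m) y\<bar> \<le> C"
  shows "\<exists>B. \<forall>m k. \<bar>z m k\<bar> \<le> B"
proof (rule ccontr)
  assume nb: "\<not> ?thesis"
  have "\<forall>k. \<exists>C. \<forall>m. \<bar>z m k\<bar> \<le> C"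
    using P[OF unit_lone] by (simp add: pairing_unit)
  then obtain S where S: "\<And>k m. \<bar>z m k\<bar> \<le> S k" by metis
  have S0: "0 \<le> S k" for k using S[of 0 k] by linarith
  define H where "H N = (\<Sum>k<N. S k)" for N
  have SH: "S k \<le> H N" if "k < N" for k N
    unfolding H_def by (rule member_le_sum) (use that S0 in auto)
  have H0: "0 \<le> H N" for N unfolding H_def by (simp add: S0 sum_nonneg)
  have zsup: "\<bar>z m k\<bar> \<le> supnorm (z m)" for m k
  proof -
    obtain B where "\<forall>k. \<bar>z m k\<bar> \<le> B" using zb by blast
    then show ?thesis using supnorm_ge by metis
  qed
  have key: "\<exists>m j. N \<le> j \<and> supnorm (z m) / 2 \<le> \<bar>z m j\<bar> \<and> real i + H N \<le> (1/8)^i * supnorm (z m) * (5/14)" for N i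
  proof -
    define T where "T = max (8^i * (14/5) * (real i + H N)) (2 * H N)"
    obtain m k where "T < \<bar>z m k\<bar>" using nb by (metis not_le)
    hence Tm: "T < supnorm (z m)" using zsup[of m k] by linarith
    have T1: "8^i * (14/5) * (real i + H N) \<le> T" and T2: "2 * H N \<le> T" unfolding T_def by auto
    have pos: "0 < supnorm (z m)" using Tm T2 H0[of N] by linarith
    obtain B where B: "\<And>k. \<bar>z m k\<bar> \<le> B" using zb by blast
    obtain j where j: "supnorm (z m)/2 < \<bar>z m j\<bar>" using supnorm_less[of "z m" B "supnorm (z m)/2", OF B] pos by (metis half_gt_zero_iff less_add_same_cancel1 field_sum_of_halves)
    have Nj: "N \<le> j"
    proof (rule ccontr)
      assume "\<not> N \<le> j"
      hence "\<bar>z m j\<bar> \<le> H N" using S[of m j] SH[of j N] by linarith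
      thus False using j Tm T2 by linarith
    qed
    have "(1/8::real)^i * supnorm (z m) * (5/14) = supnorm (z m) * (5/14) / 8^i"
      by (simp add: power_one_over)
    moreover have "real i + H N \<le> supnorm (z m) * (5/14) / 8^i"
      using T1 Tm by (simp add: pos_le_divide_eq field_simps)
    ultimately show ?thesis using Nj j by (metis less_imp_le)
  qed
  then obtain mf jf where mj: "\<And>N i. N \<le> jf N i \<and> supnorm (z (mf N i)) / 2 \<le> \<bar>z (mf N i) (jf N i)\<bar> \<and> real i + H N \<le> (1/8)^i * supnorm (z (mf N i)) * (5/14)"
    by metis
  define J where "J = rec_nat (jf 0 0) (\<lambda>i Ji. jf (Ji + 1) (Suc i))"
  have J0: "J 0 = jf 0 0" and JS: "J (Suc i) = jf (J i + 1) (Suc i)" for i by (simp_all add: J_def)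
  define Nf where "Nf i = (case i of 0 \<Rightarrow> 0 | Suc l \<Rightarrow> J l + 1)" for i
  have JN: "J i = jf (Nf i) i" for i by (cases i) (simp_all add: Nf_def J0 JS)
  define M where "M i = mf (Nf i) i" for i
  have sm: "strict_mono J" unfolding strict_mono_Suc_iff
  proof
    fix i show "J i < J (Suc i)" using mj[of "J i + 1" "Suc i"] JS[of i] by simp
  qed
  have inj: "inj J" using sm strict_mono_imp_inj_on by blast
  define y where "y k = (if k \<in> range J then (1/8::real)^(inv J k) else 0)" for k
  have yJ: "y (J i) = (1/8)^i" for i using inj by (simp add: y_def)
  have y0: "k \<notin> range J \<Longrightarrow> y k = 0" for k by (simp add: y_def)
  have ylone: "y \<in> lone"
  proof -
    have "summable (\<lambda>i. \<bar>y (J i)\<bar>)" by (simp add: yJ summable_geometric)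
    then show ?thesis unfolding lone_def mem_Collect_eq
      using summable_mono_reindex[OF sm, of "\<lambda>k. \<bar>y k\<bar>"] y0 by simp
  qed
  have pair: "pairing x y = (\<Sum>i. x (J i) * (1/8)^i)" for x
    unfolding pairing_def using suminf_mono_reindex[OF sm, of "\<lambda>k. x k * y k"] y0 by (simp add: yJ)
  obtain C where C: "\<And>m. \<bar>pairing (z m) y\<bar> \<le> C" using P[OF ylone] by blast
  have big: "real i \<le> \<bar>pairing (z (M i)) y\<bar>" for i
  proof -
    define x where "x = z (M i)"
    define sn where "sn = supnorm x"
    define q where "q = (1/8::real)^i * sn"
    define c where "c l = x (J l) * (1/8::real)^l" for l
    have xb: "\<bar>x k\<bar> \<le> sn" for k unfolding x_def sn_def by (rule zsup)
    have cb: "\<bar>c l\<bar> \<le> sn * (1/8)^l" for l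
      unfolding c_def abs_mult using xb[of "J l"] by (simp add: mult_right_mono)
    have sc: "summable c"
      by (rule summable_comparison_test[of _ "\<lambda>l. sn * (1/8)^l"]) (use cb in \<open>auto intro!: summable_mult summable_geometric\<close>)
    have split: "suminf c = (\<Sum>l. c (l + Suc i)) + sum c {..<i} + c i"
      using suminf_split_initial_segment[OF sc, of "Suc i"] by simp
    have gs: "(\<lambda>l. sn * (1/8)^(Suc i) * (1/8)^l) sums (sn * (1/8)^(Suc i) * (1 / (1 - 1/8)))"
      by (intro sums_mult geometric_sums) simp
    have ctb: "\<bar>c (l + Suc i)\<bar> \<le> sn * (1/8)^(Suc i) * (1/8)^l" for l
      using cb[of "l + Suc i"] by (simp add: power_add mult_ac)
    have sct: "summable (\<lambda>l. \<bar>c (l + Suc i)\<bar>)"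
      by (rule summable_comparison_test[OF _ sums_summable[OF gs]]) (use ctb in auto)
    have "\<bar>\<Sum>l. c (l + Suc i)\<bar> \<le> (\<Sum>l. \<bar>c (l + Suc i)\<bar>)" by (rule summable_rabs[OF sct])
    also have "\<dots> \<le> (\<Sum>l. sn * (1/8)^(Suc i) * (1/8)^l)"
      by (rule suminf_le[OF ctb sct sums_summable[OF gs]])
    also have "\<dots> = q / 7" using gs unfolding q_def by (simp add: sums_iff)
    finally have tail: "\<bar>\<Sum>l. c (l + Suc i)\<bar> \<le> q / 7" .
    have "\<bar>sum c {..<i}\<bar> \<le> (\<Sum>l<i. \<bar>c l\<bar>)" by (rule sum_abs)
    also have "\<dots> \<le> (\<Sum>l<i. S (J l))"
    proof (rule sum_mono)
      fix l
      have "\<bar>c l\<bar> \<le> \<bar>x (J l)\<bar>" unfolding c_def abs_mult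
        by (rule mult_left_le) (auto simp: power_le_one)
      then show "\<bar>c l\<bar> \<le> S (J l)" using S[of "M i" "J l"] unfolding x_def by linarith
    qed
    also have "\<dots> = sum S (J ` {..<i})" using inj by (simp add: sum.reindex inj_on_def)
    also have "\<dots> \<le> sum S {..<Nf i}"
    proof (rule sum_mono2)
      show "J ` {..<i} \<subseteq> {..<Nf i}"
      proof
        fix k assume "k \<in> J ` {..<i}"
        then obtain l where l: "l < i" "k = J l" by auto
        then obtain i' where i': "i = Suc i'" by (cases i) auto
        have "J l \<le> J i'" using l i' sm by (simp add: strict_mono_less_eq)
        then show "k \<in> {..<Nf i}" using l i' by (simp add: Nf_def)
      qed
    qed (auto simp: S0)
    finally have head: "\<bar>sum c {..<i}\<bar> \<le> H (Nf i)" unfolding H_def .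
    have mid: "q / 2 \<le> \<bar>c i\<bar>" and hq: "real i + H (Nf i) \<le> q * (5/14)"
      using mj[of "Nf i" i] unfolding c_def q_def sn_def x_def M_def JN[symmetric]
      by (auto simp: abs_mult mult_ac)
    have "pairing x y = suminf c" unfolding pair c_def ..
    then have "\<bar>pairing x y\<bar> \<ge> q/2 - q/7 - H (Nf i)"
      using split tail head mid by linarith
    then show ?thesis using hq unfolding x_def by linarith
  qed
  show False using big[of "nat \<lceil>C\<rceil> + 1"] C[of "M (nat \<lceil>C\<rceil> + 1)"] by linarith
qed
lemma pow_bound: "real a + 1 \<le> 2 ^ a"
  by (induction a) auto

lemma weight_bound:
  assumes "1 \<le> a"
  shows "(real a + 1) * (1/2::real) ^ (a^2) \<le> 2 * (1/2) ^ a"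
proof -
  obtain b where b: "a = Suc b" using assms by (cases a) auto
  have "(1/2::real) ^ (a^2) \<le> (1/2) ^ (2*b + 1)"
    by (rule power_decreasing) (auto simp: b power2_eq_square)
  also have "\<dots> = 2 * (1/2) ^ a * (1/2) ^ a" by (simp add: b power_add power_mult_distrib field_simps) (simp add: mult_2_right power_add)
  finally have 1: "(1/2::real) ^ (a^2) \<le> 2 * (1/2) ^ a * (1/2) ^ a" .
  have 2: "(real a + 1) * (1/2::real) ^ a \<le> 1"
    using pow_bound[of a] by (simp add: power_one_over field_simps)
  have "(real a + 1) * (1/2::real) ^ (a^2) \<le> (real a + 1) * (2 * (1/2) ^ a * (1/2) ^ a)"
    by (rule mult_left_mono[OF 1]) simp
  also have "\<dots> = 2 * (1/2) ^ a * ((real a + 1) * (1/2) ^ a)" by (simp add: mult_ac)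
  also have "\<dots> \<le> 2 * (1/2) ^ a * 1" by (rule mult_left_mono[OF 2]) simp
  finally show ?thesis by simp
qed

theorem mainTheorem2:
  fixes u :: "nat \<Rightarrow> nat \<Rightarrow> real" and a :: "nat \<Rightarrow> nat"
    and z :: "nat \<Rightarrow> nat \<Rightarrow> real" and zbar :: "nat \<Rightarrow> real"
  assumes u_c00: "\<And>n. u n \<in> c00Q"
    and u_inf: "\<And>v. v \<in> c00Q \<Longrightarrow> infinite {n. u n = v}"
    and a_mono: "strict_mono a"
    and a_pos: "\<And>n. a n > 0"
    and a_supp: "\<And>n k. k \<in> supp_seq (u n) \<Longrightarrow> k < a n"
    and a_norm1: "\<And>n. real (a n) > norm1 (u n)"
    and z_linf: "\<And>m. z m \<in> linf"
    and zbar_linf: "zbar \<in> linf"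
    and wstar: "weak_star_conv z zbar"
  shows "(convergent (\<lambda>m. tnorm u a (z m)) \<longleftrightarrow> convergent (\<lambda>m. supnorm (z m)))
       \<and> (((\<lambda>m. tnorm u a (z m)) \<longlonglongrightarrow> tnorm u a zbar)
           \<longleftrightarrow> ((\<lambda>m. supnorm (z m)) \<longlonglongrightarrow> supnorm zbar))"
proof -
  define v where "v n = (\<lambda>k. u n k - unitvec (a n) k)" for n
  define w where "w n = (1/2::real) ^ ((a n)^2)" for n
  have w0: "0 \<le> w n" for n by (simp add: w_def)
  have su: "summable (\<lambda>k. \<bar>u n k\<bar>)" for n
    using u_c00[of n] unfolding c00Q_def supp_seq_def
    by (intro summable_finite[of "{k. u n k \<noteq> 0}"]) auto
  have se: "summable (\<lambda>k. \<bar>unitvec (a n) k\<bar>)" for n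
    using unit_lone unfolding lone_def by auto
  have vle: "\<bar>v n k\<bar> \<le> \<bar>u n k\<bar> + \<bar>unitvec (a n) k\<bar>" for n k
    unfolding v_def by linarith
  have sv: "summable (\<lambda>k. \<bar>v n k\<bar>)" for n
    by (rule summable_comparison_test[OF _ summable_add[OF su se]]) (use vle in auto)
  have vlone: "v n \<in> lone" for n using sv by (simp add: lone_def)
  have n1v: "norm1 (v n) \<le> real (a n) + 1" for n
  proof -
    have "norm1 (v n) \<le> (\<Sum>k. \<bar>u n k\<bar> + \<bar>unitvec (a n) k\<bar>)"
      unfolding norm1_def by (rule suminf_le[OF vle sv summable_add[OF su se]])
    also have "\<dots> = norm1 (u n) + norm1 (unitvec (a n))"
      unfolding norm1_def by (rule suminf_add[OF su se, symmetric])
    finally show ?thesis using a_norm1[of n] norm1_unit by simp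
  qed
  have n1v0: "0 \<le> norm1 (v n)" for n unfolding norm1_def by (rule suminf_nonneg[OF sv]) simp
  have wv: "w n * norm1 (v n) \<le> 2 * (1/2) ^ n" for n
  proof -
    have "w n * norm1 (v n) \<le> w n * (real (a n) + 1)" by (rule mult_left_mono[OF n1v w0])
    also have "\<dots> \<le> 2 * (1/2) ^ (a n)" using weight_bound[of "a n"] a_pos[of n]
      unfolding w_def by (simp add: mult_ac)
    also have "\<dots> \<le> 2 * (1/2) ^ n"
      using power_decreasing[of n "a n" "1/2::real"] seq_suble[OF a_mono, of n] by simp
    finally show ?thesis .
  qed
  have "\<exists>B. \<forall>m k. \<bar>z m k\<bar> \<le> B"
  proof (rule hump)
    show "\<exists>B. \<forall>k. \<bar>z m k\<bar> \<le> B" for m using linf_bound[OF z_linf] .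
    fix y assume "y \<in> lone"
    then have "convergent (\<lambda>m. pairing (z m) y)"
      using wstar unfolding weak_star_conv_def convergent_def by blast
    then have "Bseq (\<lambda>m. pairing (z m) y)" by (rule convergent_imp_Bseq)
    then show "\<exists>C. \<forall>m. \<bar>pairing (z m) y\<bar> \<le> C" unfolding Bseq_def by auto
  qed
  then obtain B where B: "\<And>m k. \<bar>z m k\<bar> \<le> B" by blast
  have B0: "0 \<le> B" using B[of 0 0] by linarith
  define A where "A k m = w k * \<bar>pairing (z m) (v k)\<bar>" for k m
  define b where "b k = w k * \<bar>pairing zbar (v k)\<bar>" for k
  have lim: "(\<lambda>m. A k m) \<longlonglongrightarrow> b k" for k
    unfolding A_def b_def
    using wstar vlone[of k] unfolding weak_star_conv_def
    by (intro tendsto_mult tendsto_const tendsto_rabs) blast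
  have bnd: "norm (A k m) \<le> w k * (B * norm1 (v k))" for k m
    unfolding A_def using pair_bound(2)[OF B vlone] w0
    by (simp add: abs_mult mult_left_mono)
  have sM: "summable (\<lambda>k. w k * (B * norm1 (v k)))"
  proof (rule summable_comparison_test[of _ "\<lambda>k. B * (2 * (1/2)^k)"])
    show "\<exists>N. \<forall>n\<ge>N. norm (w n * (B * norm1 (v n))) \<le> B * (2 * (1 / 2) ^ n)"
      using wv B0 w0 n1v0 by (auto simp: mult_left_mono mult.left_commute)
  qed (intro summable_mult summable_geometric, simp)
  have T: "(\<lambda>m. suminf (\<lambda>k. A k m)) \<longlonglongrightarrow> suminf b"
    using tannerys_theorem[of A b sequentially "\<lambda>k. w k * (B * norm1 (v k))", OF lim _ sM]
      bnd by (auto intro: always_eventually)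
  have tn: "tnorm u a x = supnorm x + (\<Sum>k. w k * \<bar>pairing x (v k)\<bar>)" for x
    unfolding tnorm_def v_def w_def ..
  define Sm where "Sm m = suminf (\<lambda>k. A k m)" for m
  have tz: "(\<lambda>m. tnorm u a (z m)) = (\<lambda>m. supnorm (z m) + Sm m)"
    by (simp add: tn Sm_def A_def)
  have tzb: "tnorm u a zbar = supnorm zbar + suminf b" unfolding tn b_def ..
  have T': "Sm \<longlonglongrightarrow> suminf b" using T unfolding Sm_def .
  have cS: "convergent Sm" using T' convergent_def by blast
  have c1: "convergent (\<lambda>m. supnorm (z m) + Sm m) \<longleftrightarrow> convergent (\<lambda>m. supnorm (z m))"
  proof
    assume "convergent (\<lambda>m. supnorm (z m) + Sm m)"
    from convergent_diff[OF this cS] show "convergent (\<lambda>m. supnorm (z m))" by simp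
  next
    assume "convergent (\<lambda>m. supnorm (z m))"
    from convergent_add[OF this cS] show "convergent (\<lambda>m. supnorm (z m) + Sm m)" .
  qed
  have c2: "((\<lambda>m. supnorm (z m) + Sm m) \<longlonglongrightarrow> supnorm zbar + suminf b)
      \<longleftrightarrow> ((\<lambda>m. supnorm (z m)) \<longlonglongrightarrow> supnorm zbar)"
  proof
    assume "(\<lambda>m. supnorm (z m) + Sm m) \<longlonglongrightarrow> supnorm zbar + suminf b"
    from tendsto_diff[OF this T'] show "(\<lambda>m. supnorm (z m)) \<longlonglongrightarrow> supnorm zbar" by simp
  next
    assume "(\<lambda>m. supnorm (z m)) \<longlonglongrightarrow> supnorm zbar"
    from tendsto_add[OF this T'] show "(\<lambda>m. supnorm (z m) + Sm m) \<longlonglongrightarrow> supnorm zbar + suminf b" .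
  qed
  show ?thesis unfolding tz tzb using c1 c2 by blast
qed

end
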